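(* Let $n$ be a positive integer, $G=\mathbb{Z}\times\mathbb{Z}_n=\langle z\rangle\times\langle a\rangle$, and let $\mathcal{S}$ be a Schur ring over $G$ such that $\mathbb{Z}^{(n)}=\langle z^n\rangle$ is an $\mathcal{S}$-subgroup. Let $C$ be an $\mathcal{S}$-subset. Then $C$ is an $\mathcal{S}$-class if and only if $C^{(k)}$ is an $\mathcal{S}$-class for all integers $k$ with $\gcd(k,n)=1$.
   Context: $F$ is a field of characteristic $0$; $\mathbb{Z}=\langle z\rangle$ is infinite cyclic and $\mathbb{Z}_n=\langle a\rangle$ is cyclic of order $n$, written multiplicatively. For finite $C\subseteq G$, $\overline{C}=\sum_{g\in C}g\in F[G]$ and $C^*=\{g^{-1}:g\in C\}$. A Schur ring over $G$ is a subspace $\mathcal{S}=\mathrm{Span}_F\{\overline{C}:C\in\mathcal{D}\}$ of $F[G]$, where $\mathcal{D}=\mathcal{D}(\mathcal{S})$ is a partition of $G$ into finite subsets with $\{1\}\in\mathcal{D}$, $C\in\mathcal{D}\Rightarrow C^*\in\mathcal{D}$, and each product $\overline{C}\,\overline{D}$ ($C,D\in\mathcal{D}$) a finite $F$-linear combination of the $\overline{E}$, $E\in\mathcal{D}$. Members of $\mathcal{D}(\mathcal{S})$ are $\mathcal{S}$-classes (primitive sets); an $\mathcal{S}$-subset is a union of $\mathcal{S}$-classes; an $\mathcal{S}$-subgroup is a subgroup which is an $\mathcal{S}$-subset. For a subset $C$ and integer $k$, $C^{(k)}=\{g^k:g\in C\}$. *)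

theory Defs
  imports Main
begin

text \<open>The group G = Z x Z_n = <z> x <a> is modelled on the carrier
  UNIV x {0..<n} inside int x int: the pair (i, j) stands for z^i a^j,
  with multiplication (i,j)(i',j') = (i+i', (j+j') mod n).\<close>

definition zzn_carrier :: "int \<Rightarrow> (int \<times> int) set" where
  "zzn_carrier n = UNIV \<times> {0..<n}"

definition zzn_mult :: "int \<Rightarrow> int \<times> int \<Rightarrow> int \<times> int \<Rightarrow> int \<times> int" where
  "zzn_mult n x y = (fst x + fst y, (snd x + snd y) mod n)"

definition zzn_one :: "int \<times> int" where
  "zzn_one = (0, 0)"

definition zzn_inv :: "int \<Rightarrow> int \<times> int \<Rightarrow> int \<times> int" where
  "zzn_inv n x = (- fst x, (- snd x) mod n)"

definition zzn_pow :: "int \<Rightarrow> int \<Rightarrow> int \<times> int \<Rightarrow> int \<times> int" where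
  "zzn_pow n k x = (k * fst x, (k * snd x) mod n)"

definition set_inv :: "int \<Rightarrow> (int \<times> int) set \<Rightarrow> (int \<times> int) set" where
  "set_inv n C = zzn_inv n ` C"

definition set_pow :: "int \<Rightarrow> int \<Rightarrow> (int \<times> int) set \<Rightarrow> (int \<times> int) set" where
  "set_pow n k C = zzn_pow n k ` C"

definition Zn_sub :: "int \<Rightarrow> (int \<times> int) set" where
  "Zn_sub n = {(n * m, 0) | m. True}"

text \<open>Coefficient of g in the product \<open>C\<close>-bar times \<open>D\<close>-bar in F[G] (C, D finite).\<close>
definition class_prod :: "int \<Rightarrow> (int \<times> int) set \<Rightarrow> (int \<times> int) set \<Rightarrow> int \<times> int \<Rightarrow> 'f::field" where
  "class_prod n C D g = of_nat (card {(c, d). c \<in> C \<and> d \<in> D \<and> zzn_mult n c d = g})"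

text \<open>An element of F[G] (given by its coefficient function on G) is a finite
  F-linear combination of the class sums of classes in \<open>\<D>\<close>.\<close>
definition in_span_classes :: "int \<Rightarrow> (int \<times> int) set set \<Rightarrow> (int \<times> int \<Rightarrow> 'f::field) \<Rightarrow> bool" where
  "in_span_classes n \<D> f \<longleftrightarrow>
     (\<exists>E c. finite E \<and> E \<subseteq> \<D> \<and>
        (\<forall>g \<in> zzn_carrier n. f g = (\<Sum>e\<in>E. c e * (if g \<in> e then 1 else 0))))"

text \<open>\<D> is the set of classes of a Schur ring over G = Z x Z_n with coefficients in F
  (the field F enters through the type 'f).\<close>
definition schur_partition :: "'f::field itself \<Rightarrow> int \<Rightarrow> (int \<times> int) set set \<Rightarrow> bool" where
  "schur_partition TYPE('f) n \<D> \<longleftrightarrow>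
     (\<forall>C\<in>\<D>. C \<noteq> {} \<and> finite C \<and> C \<subseteq> zzn_carrier n) \<and>
     (\<forall>C\<in>\<D>. \<forall>D\<in>\<D>. C \<noteq> D \<longrightarrow> C \<inter> D = {}) \<and>
     \<Union>\<D> = zzn_carrier n \<and>
     {zzn_one} \<in> \<D> \<and>
     (\<forall>C\<in>\<D>. set_inv n C \<in> \<D>) \<and>
     (\<forall>C\<in>\<D>. \<forall>D\<in>\<D>. in_span_classes n \<D> (class_prod n C D :: int \<times> int \<Rightarrow> 'f))"

definition S_subset :: "(int \<times> int) set set \<Rightarrow> (int \<times> int) set \<Rightarrow> bool" where
  "S_subset \<D> C \<longleftrightarrow> (\<exists>T \<subseteq> \<D>. C = \<Union>T)"

end

theory Submission
  imports Defs "HOL-Computational_Algebra.Primes" "HOL-Number_Theory.Cong"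
begin


lemma nonempty_witness: "A \<noteq> {} \<Longrightarrow> (\<And>x. x \<in> A \<Longrightarrow> P) \<Longrightarrow> P" by blast

lemma zm_comm: "zzn_mult n x y = zzn_mult n y x"
  by (simp add: zzn_mult_def add.commute)

lemma zm_assoc: "zzn_mult n (zzn_mult n x y) w = zzn_mult n x (zzn_mult n y w)"
  by (simp add: zzn_mult_def mod_add_left_eq mod_add_right_eq add.assoc)

lemma count_inv:
  assumes sp: "schur_partition TYPE('f::field_char_0) n D"
    and C1: "C1 \<in> D" and C2: "C2 \<in> D" and K: "K \<in> D" and x: "x \<in> K" and y: "y \<in> K"
  shows "card {(c, d). c \<in> C1 \<and> d \<in> C2 \<and> zzn_mult n c d = x}
       = card {(c, d). c \<in> C1 \<and> d \<in> C2 \<and> zzn_mult n c d = y}"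
proof -
  have sp': "\<forall>C\<in>D. C \<noteq> {} \<and> finite C \<and> C \<subseteq> zzn_carrier n"
    "\<forall>C\<in>D. \<forall>D'\<in>D. C \<noteq> D' \<longrightarrow> C \<inter> D' = {}"
    "in_span_classes n D (class_prod n C1 C2 :: int \<times> int \<Rightarrow> 'f)"
    using sp C1 C2 unfolding schur_partition_def by auto
  obtain E c where E: "finite E" "E \<subseteq> D"
    and f: "\<forall>g \<in> zzn_carrier n. (class_prod n C1 C2 g :: 'f) = (\<Sum>e\<in>E. c e * (if g \<in> e then 1 else 0))"
    using sp'(3) unfolding in_span_classes_def by blast
  have val: "(class_prod n C1 C2 g :: 'f) = (if K \<in> E then c K else 0)" if g: "g \<in> K" for g
  proof -
    have gc: "g \<in> zzn_carrier n" using g K sp'(1) by blast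
    have "(\<Sum>e\<in>E. c e * (if g \<in> e then 1 else 0)) = (\<Sum>e\<in>E. if e = K then c e else 0)"
    proof (rule sum.cong)
      fix e assume "e \<in> E"
      then have "e \<in> D" using E by blast
      then show "c e * (if g \<in> e then 1 else 0) = (if e = K then c e else 0)"
        using sp'(2) K g by auto
    qed simp
    also have "\<dots> = (if K \<in> E then c K else 0)" using E(1) by (simp add: sum.delta)
    finally show ?thesis using f gc by simp
  qed
  have "(class_prod n C1 C2 x :: 'f) = class_prod n C1 C2 y" using val x y by simp
  then show ?thesis unfolding class_prod_def by simp
qed




locale sr =
  fixes n :: int and D :: "(int \<times> int) set set"
  assumes npos: "n > 0"
  and cls: "\<And>C. C \<in> D \<Longrightarrow> C \<noteq> {} \<and> finite C \<and> C \<subseteq> zzn_carrier n"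
  and disj: "\<And>C C'. C \<in> D \<Longrightarrow> C' \<in> D \<Longrightarrow> C \<noteq> C' \<Longrightarrow> C \<inter> C' = {}"
  and cover: "\<Union>D = zzn_carrier n"
  and one: "{zzn_one} \<in> D"
  and invc: "\<And>C. C \<in> D \<Longrightarrow> set_inv n C \<in> D"
  and cnt: "\<And>C1 C2 K x y. C1 \<in> D \<Longrightarrow> C2 \<in> D \<Longrightarrow> K \<in> D \<Longrightarrow> x \<in> K \<Longrightarrow> y \<in> K \<Longrightarrow>
     card {(c, d). c \<in> C1 \<and> d \<in> C2 \<and> zzn_mult n c d = x}
       = card {(c, d). c \<in> C1 \<and> d \<in> C2 \<and> zzn_mult n c d = y}"
begin

abbreviation "G \<equiv> zzn_carrier n"
abbreviation mul (infixl "\<cdot>" 70) where "x \<cdot> y \<equiv> zzn_mult n x y"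
abbreviation "pw k x \<equiv> zzn_pow n k x"

lemma inG: "x \<in> G \<longleftrightarrow> 0 \<le> snd x \<and> snd x < n"
  by (cases x) (auto simp: zzn_carrier_def)

lemma mul_G: "x \<cdot> y \<in> G"
  using npos by (simp add: inG zzn_mult_def)

lemma pw_G: "pw k x \<in> G"
  using npos by (simp add: inG zzn_pow_def)

lemma one_G: "zzn_one \<in> G"
  using npos by (simp add: inG zzn_one_def)

lemma mod_id: "x \<in> G \<Longrightarrow> snd x mod n = snd x"
  by (simp add: inG)

lemma ex_class: "x \<in> G \<Longrightarrow> \<exists>C\<in>D. x \<in> C"
  using cover by blast

definition cl where "cl x = (THE C. C \<in> D \<and> x \<in> C)"

lemma cl_eq: "C \<in> D \<Longrightarrow> x \<in> C \<Longrightarrow> cl x = C"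
  unfolding cl_def
proof (rule the_equality)
  assume "C \<in> D" "x \<in> C" then show "C \<in> D \<and> x \<in> C" by simp
next
  fix C' assume "C \<in> D" "x \<in> C" "C' \<in> D \<and> x \<in> C'"
  then show "C' = C" using disj by blast
qed

lemma cl: "x \<in> G \<Longrightarrow> cl x \<in> D \<and> x \<in> cl x"
  using ex_class cl_eq by metis

definition Scl where "Scl X \<longleftrightarrow> X \<subseteq> G \<and> (\<forall>x\<in>X. cl x \<subseteq> X)"

lemma Scl_class: "C \<in> D \<Longrightarrow> Scl C"
  unfolding Scl_def using cls cl_eq by (metis order_refl)

lemma Scl_Union: "(\<And>X. X \<in> A \<Longrightarrow> Scl X) \<Longrightarrow> Scl (\<Union>A)"
  unfolding Scl_def by (meson UnionE UnionI Union_least subset_iff)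

lemma Scl_Un: "Scl X \<Longrightarrow> Scl Y \<Longrightarrow> Scl (X \<union> Y)"
  unfolding Scl_def by (meson Un_iff Un_least le_supI1 le_supI2)

lemma Scl_decomp: "Scl X \<Longrightarrow> X = \<Union>{C\<in>D. C \<subseteq> X}"
proof
  assume s: "Scl X"
  show "X \<subseteq> \<Union>{C\<in>D. C \<subseteq> X}"
  proof
    fix x assume x: "x \<in> X"
    then have "x \<in> G" using s unfolding Scl_def by blast
    then have "cl x \<in> D" "x \<in> cl x" using cl by auto
    moreover have "cl x \<subseteq> X" using s x unfolding Scl_def by blast
    ultimately show "x \<in> \<Union>{C\<in>D. C \<subseteq> X}" by blast
  qed
qed blast

lemma Scl_in_class: "Scl X \<Longrightarrow> X \<noteq> {} \<Longrightarrow> C \<in> D \<Longrightarrow> X \<subseteq> C \<Longrightarrow> X = C"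
proof -
  assume s: "Scl X" "X \<noteq> {}" "C \<in> D" "X \<subseteq> C"
  from s(2) obtain x where x: "x \<in> X" by blast
  then have "cl x = C" using s cl_eq by blast
  then have "C \<subseteq> X" using s x unfolding Scl_def by blast
  then show "X = C" using s by blast
qed

lemma Scl_S_subset: "Scl X \<longleftrightarrow> S_subset D X"
proof
  assume "Scl X" then show "S_subset D X" unfolding S_subset_def
    by (intro exI[of _ "{C\<in>D. C \<subseteq> X}"]) (use Scl_decomp in auto)
next
  assume "S_subset D X"
  then obtain T where "T \<subseteq> D" "X = \<Union>T" unfolding S_subset_def by blast
  then show "Scl X" using Scl_Union Scl_class by (metis subsetD)
qed

lemma cl_one: "cl zzn_one = {zzn_one}"
  using cl_eq one by blast

definition prodset where "prodset A B = {a \<cdot> b | a b. a \<in> A \<and> b \<in> B}"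

lemma Scl_prodset:
  assumes "C1 \<in> D" "C2 \<in> D" shows "Scl (prodset C1 C2)"
  unfolding Scl_def
proof (intro conjI ballI subsetI)
  fix x assume "x \<in> prodset C1 C2" then show "x \<in> G" unfolding prodset_def using mul_G by auto
next
  fix x y assume x: "x \<in> prodset C1 C2" and y: "y \<in> cl x"
  have xG: "x \<in> G" using x unfolding prodset_def using mul_G by auto
  let ?S = "\<lambda>g. {(c, d). c \<in> C1 \<and> d \<in> C2 \<and> c \<cdot> d = g}"
  have fin: "finite (?S g)" for g
    by (rule finite_subset[of _ "C1 \<times> C2"]) (use assms cls in auto)
  have "?S x \<noteq> {}" using x unfolding prodset_def by auto
  then have "card (?S x) \<noteq> 0" using fin by simp
  moreover have "card (?S x) = card (?S y)"
    using cnt[OF assms cl[OF xG, THEN conjunct1]] cl[OF xG] y by blast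
  ultimately have "card (?S y) \<noteq> 0" by simp
  then have "?S y \<noteq> {}" by (metis (no_types) card.empty)
  then obtain cd where "cd \<in> ?S y" by (rule nonempty_witness)
  then obtain c d where "c \<in> C1" "d \<in> C2" "c \<cdot> d = y" by (cases cd) blast
  then show "y \<in> prodset C1 C2" unfolding prodset_def by blast
qed

end



lemma replicate_same: "\<forall>y\<in>set xs. y = x \<Longrightarrow> xs = replicate (length xs) x"
  by (induction xs) auto

context sr begin

lemma pw_comp: "pw a (pw b x) = pw (a * b) x"
  by (simp add: zzn_pow_def mod_mult_right_eq mult.assoc)

lemma pw_one: "x \<in> G \<Longrightarrow> pw 1 x = x"
  by (cases x) (simp add: zzn_pow_def inG)

lemma pw_neg: "pw (- k) x = zzn_inv n (pw k x)"
  by (simp add: zzn_pow_def zzn_inv_def mod_minus_eq)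

lemma pw_inj:
  assumes "k \<noteq> 0" "coprime k n" shows "inj_on (pw k) G"
proof (rule inj_onI)
  fix x y assume x: "x \<in> G" and y: "y \<in> G" and e: "pw k x = pw k y"
  obtain a b where xab: "x = (a, b)" by (cases x)
  obtain c d where ycd: "y = (c, d)" by (cases y)
  have 1: "k * a = k * c" and 2: "(k * b) mod n = (k * d) mod n"
    using e xab ycd by (simp_all add: zzn_pow_def)
  from 1 have "a = c" using assms(1) by simp
  from 2 have "[k * b = k * d] (mod n)" by (simp add: cong_def)
  then have "[b = d] (mod n)" using cong_mult_lcancel[OF assms(2)] by simp
  then have "b mod n = d mod n" by (simp add: cong_def)
  then have "b = d" using mod_id[OF x] mod_id[OF y] xab ycd by simp
  then show "x = y" using \<open>a = c\<close> xab ycd by simp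
qed

definition gprod where "gprod xs = foldr (\<lambda>x y. x \<cdot> y) xs zzn_one"

lemma gprod_G: "gprod xs \<in> G"
  by (cases xs) (simp_all add: gprod_def one_G mul_G)

lemma one_mul: "y \<in> G \<Longrightarrow> zzn_one \<cdot> y = y"
  by (cases y) (simp add: zzn_mult_def zzn_one_def inG)

lemma gprod_Nil: "gprod [] = zzn_one" by (simp add: gprod_def)
lemma gprod_Cons: "gprod (x # xs) = x \<cdot> gprod xs" by (simp add: gprod_def)

lemma gprod_append: "gprod (xs @ ys) = gprod xs \<cdot> gprod ys"
proof (induction xs)
  case Nil then show ?case by (simp add: gprod_Nil one_mul gprod_G)
next
  case (Cons x xs) then show ?case by (simp add: gprod_Cons zm_assoc)
qed

lemma gprod_rotate1: "gprod (rotate1 xs) = gprod xs"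
proof (cases xs)
  case Nil then show ?thesis by simp
next
  case (Cons x ys)
  have "gprod (rotate1 xs) = gprod ys \<cdot> (x \<cdot> zzn_one)"
    using Cons by (simp add: gprod_append gprod_Cons gprod_Nil)
  also have "\<dots> = gprod ys \<cdot> x"
  proof -
    have "x \<cdot> zzn_one = (fst x, snd x mod n)" by (simp add: zzn_mult_def zzn_one_def)
    then show ?thesis by (simp add: zzn_mult_def mod_add_right_eq)
  qed
  also have "\<dots> = x \<cdot> gprod ys" by (rule zm_comm)
  finally show ?thesis using Cons by (simp add: gprod_Cons)
qed

lemma gprod_rotate: "gprod (rotate k xs) = gprod xs"
  by (induction k) (simp_all add: gprod_rotate1)

lemma gprod_replicate: "c \<in> G \<Longrightarrow> gprod (replicate m c) = pw (int m) c"
proof (induction m)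
  case 0 then show ?case by (simp add: gprod_Nil zzn_one_def zzn_pow_def)
next
  case (Suc m)
  then show ?case
    by (simp add: gprod_Cons zzn_mult_def zzn_pow_def mod_add_right_eq algebra_simps)
qed

definition L where "L C k g = {xs. length xs = k \<and> set xs \<subseteq> C \<and> gprod xs = g}"

lemma L_fin: "finite C \<Longrightarrow> finite (L C k g)"
  by (rule finite_subset[of _ "{xs. set xs \<subseteq> C \<and> length xs = k}"])
     (auto simp: L_def finite_lists_length_eq)

lemma L_supp_fin:
  assumes fC: "finite C" shows "finite {y. card (L C k y) \<noteq> 0}"
proof (rule finite_subset[of _ "gprod ` {xs. set xs \<subseteq> C \<and> length xs = k}"])
  show "{y. card (L C k y) \<noteq> 0} \<subseteq> gprod ` {xs. set xs \<subseteq> C \<and> length xs = k}"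
  proof
    fix y assume "y \<in> {y. card (L C k y) \<noteq> 0}"
    then have "card (L C k y) \<noteq> 0" by simp
    then have "L C k y \<noteq> {}" by (metis (no_types) card.empty)
    then obtain xs where "xs \<in> L C k y" by blast
    then have "length xs = k" "set xs \<subseteq> C" "gprod xs = y" by (simp_all add: L_def)
    then show "y \<in> gprod ` {xs. set xs \<subseteq> C \<and> length xs = k}"
      by (intro image_eqI[of _ _ xs]) simp_all
  qed
  show "finite (gprod ` {xs. set xs \<subseteq> C \<and> length xs = k})"
    by (intro finite_imageI finite_lists_length_eq fC)
qed

lemma L_supp_G: "card (L C k y) \<noteq> 0 \<Longrightarrow> y \<in> G"
proof -
  assume "card (L C k y) \<noteq> 0"
  then have "L C k y \<noteq> {}" by (metis (no_types) card.empty)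
  then obtain xs where "xs \<in> L C k y" by blast
  then show "y \<in> G" unfolding L_def using gprod_G by auto
qed

lemma pair_card:
  assumes "finite C" "finite K"
  shows "(\<Sum>y\<in>K. card {c\<in>C. c \<cdot> y = g}) = card {(c, d). c \<in> C \<and> d \<in> K \<and> c \<cdot> d = g}"
proof -
  have e: "{(c, d). c \<in> C \<and> d \<in> K \<and> c \<cdot> d = g} = (\<lambda>(d, c). (c, d)) ` (SIGMA d:K. {c\<in>C. c \<cdot> d = g})"
    by auto
  have i: "inj_on (\<lambda>(d, c). (c, d)) (SIGMA d:K. {c\<in>C. c \<cdot> d = g})"
    by (auto simp: inj_on_def)
  show ?thesis unfolding e card_image[OF i] using assms by simp
qed

end



context sr begin

lemma L_Suc:
  assumes fC: "finite C"
  shows "card (L C (Suc k) g) = (\<Sum>y\<in>{y. card (L C k y) \<noteq> 0}. card (L C k y) * card {c\<in>C. c \<cdot> y = g})"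
proof -
  define Z where "Z = {y. card (L C k y) \<noteq> 0}"
  define S where "S = (SIGMA y:Z. ({c\<in>C. c \<cdot> y = g} \<times> L C k y))"
  define h where "h = (\<lambda>(y::int\<times>int, c::int\<times>int, ys::(int\<times>int) list). c # ys)"
  have finZ: "finite Z" unfolding Z_def by (rule L_supp_fin[OF fC])
  have e: "L C (Suc k) g = h ` S"
  proof
    show "L C (Suc k) g \<subseteq> h ` S"
    proof
      fix xs assume xs: "xs \<in> L C (Suc k) g"
      then have len: "length xs = Suc k" by (simp add: L_def)
      then obtain c ys where xs_eq: "xs = c # ys" by (cases xs) auto
      have c: "c \<in> C" and ys: "set ys \<subseteq> C" "length ys = k" and g: "c \<cdot> gprod ys = g"
        using xs xs_eq by (simp_all add: L_def gprod_Cons)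
      have ysL: "ys \<in> L C k (gprod ys)" using ys by (simp add: L_def)
      then have "L C k (gprod ys) \<noteq> {}" by blast
      then have "card (L C k (gprod ys)) \<noteq> 0" using L_fin[OF fC] by simp
      then have "gprod ys \<in> Z" unfolding Z_def by simp
      then have "(gprod ys, c, ys) \<in> S" unfolding S_def using c g ysL by simp
      moreover have "xs = h (gprod ys, c, ys)" unfolding h_def using xs_eq by simp
      ultimately show "xs \<in> h ` S" by (rule rev_image_eqI)
    qed
  next
    show "h ` S \<subseteq> L C (Suc k) g"
    proof
      fix xs assume "xs \<in> h ` S"
      then obtain y c ys where t: "(y, c, ys) \<in> S" and xs: "xs = c # ys"
        unfolding h_def by auto
      then have "c \<in> C" "c \<cdot> y = g" "ys \<in> L C k y" unfolding S_def by auto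
      then show "xs \<in> L C (Suc k) g" using xs by (auto simp: L_def gprod_Cons)
    qed
  qed
  have inj: "inj_on h S"
  proof (rule inj_onI)
    fix a b assume a: "a \<in> S" and b: "b \<in> S" and hab: "h a = h b"
    obtain y c ys where av: "a = (y, c, ys)" by (cases a) auto
    obtain y' c' ys' where bv: "b = (y', c', ys')" by (cases b) auto
    have "c = c'" "ys = ys'" using hab av bv unfolding h_def by simp_all
    moreover have "y = gprod ys" using a av unfolding S_def L_def by simp
    moreover have "y' = gprod ys'" using b bv unfolding S_def L_def by simp
    ultimately show "a = b" using av bv by simp
  qed
  have "card (L C (Suc k) g) = card S" unfolding e using card_image[OF inj] .
  also have "\<dots> = (\<Sum>y\<in>Z. card ({c\<in>C. c \<cdot> y = g} \<times> L C k y))"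
    unfolding S_def using finZ fC L_fin[OF fC] by (simp add: card_SigmaI)
  also have "\<dots> = (\<Sum>y\<in>Z. card (L C k y) * card {c\<in>C. c \<cdot> y = g})"
    by (simp add: card_cartesian_product mult.commute)
  finally show ?thesis unfolding Z_def .
qed

lemma conv_inv:
  fixes f :: "int \<times> int \<Rightarrow> nat"
  assumes C: "C \<in> D"
    and fin: "finite {y. f y \<noteq> 0}"
    and supp: "\<And>y. f y \<noteq> 0 \<Longrightarrow> y \<in> G"
    and inv: "\<And>x y. x \<in> G \<Longrightarrow> y \<in> cl x \<Longrightarrow> f y = f x"
    and g: "g \<in> G" and g': "g' \<in> cl g"
  shows "(\<Sum>y\<in>{y. f y \<noteq> 0}. f y * card {c\<in>C. c \<cdot> y = g})
       = (\<Sum>y\<in>{y. f y \<noteq> 0}. f y * card {c\<in>C. c \<cdot> y = g'})"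
proof -
  define Z where "Z = {y. f y \<noteq> 0}"
  define F where "F = {K\<in>D. K \<subseteq> Z}"
  have sZ: "Scl Z" unfolding Scl_def
  proof (intro conjI ballI subsetI)
    fix y assume "y \<in> Z" then show "y \<in> G" using supp unfolding Z_def by simp
  next
    fix x y assume x: "x \<in> Z" and y: "y \<in> cl x"
    have xG: "x \<in> G" using x supp unfolding Z_def by simp
    have "f y = f x" using inv[OF xG y] .
    then show "y \<in> Z" using x unfolding Z_def by simp
  qed
  have Zeq: "Z = \<Union>F" unfolding F_def using Scl_decomp[OF sZ] .
  have finF: "finite F"
    by (rule finite_subset[of _ "Pow Z"]) (use fin in \<open>auto simp: F_def Z_def\<close>)
  have finK: "\<forall>K\<in>F. finite K" unfolding F_def using cls by blast
  have disjF: "\<forall>A\<in>F. \<forall>B\<in>F. A \<noteq> B \<longrightarrow> A \<inter> B = {}" unfolding F_def using disj by blast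
  have CC: "finite C" using cls[OF C] by blast
  have key: "(\<Sum>y\<in>K. f y * card {c\<in>C. c \<cdot> y = h}) = f (SOME y. y \<in> K) * card {(c, d). c \<in> C \<and> d \<in> K \<and> c \<cdot> d = h}"
    if K: "K \<in> D" for K h
  proof -
    have Kn: "K \<noteq> {}" "finite K" "K \<subseteq> G" using cls[OF K] by auto
    then have r: "(SOME y. y \<in> K) \<in> K" by (simp add: some_in_eq)
    have fy: "f y = f (SOME y. y \<in> K)" if "y \<in> K" for y
    proof -
      have "cl y = K" using cl_eq[OF K that] .
      moreover have "cl (SOME y. y \<in> K) = K" using cl_eq[OF K r] .
      moreover have "y \<in> G" using that Kn by blast
      ultimately show ?thesis using inv[of y "SOME y. y \<in> K"] r by simp
    qed
    have "(\<Sum>y\<in>K. f y * card {c\<in>C. c \<cdot> y = h}) = (\<Sum>y\<in>K. f (SOME y. y \<in> K) * card {c\<in>C. c \<cdot> y = h})"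
      by (rule sum.cong) (simp_all add: fy)
    also have "\<dots> = f (SOME y. y \<in> K) * (\<Sum>y\<in>K. card {c\<in>C. c \<cdot> y = h})"
      by (simp add: sum_distrib_left)
    also have "\<dots> = f (SOME y. y \<in> K) * card {(c, d). c \<in> C \<and> d \<in> K \<and> c \<cdot> d = h}"
      using pair_card[OF CC Kn(2)] by simp
    finally show ?thesis .
  qed
  have gcl: "cl g \<in> D" "g \<in> cl g" using cl[OF g] by auto
  have "(\<Sum>y\<in>Z. f y * card {c\<in>C. c \<cdot> y = g}) = (\<Sum>K\<in>F. \<Sum>y\<in>K. f y * card {c\<in>C. c \<cdot> y = g})"
    unfolding Zeq by (simp add: sum.Union_disjoint[OF finK disjF])
  also have "\<dots> = (\<Sum>K\<in>F. f (SOME y. y \<in> K) * card {(c, d). c \<in> C \<and> d \<in> K \<and> c \<cdot> d = g})"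
    by (rule sum.cong) (simp_all add: key F_def)
  also have "\<dots> = (\<Sum>K\<in>F. f (SOME y. y \<in> K) * card {(c, d). c \<in> C \<and> d \<in> K \<and> c \<cdot> d = g'})"
  proof (rule sum.cong)
    fix K assume "K \<in> F"
    then have K: "K \<in> D" unfolding F_def by simp
    show "f (SOME y. y \<in> K) * card {(c, d). c \<in> C \<and> d \<in> K \<and> c \<cdot> d = g}
        = f (SOME y. y \<in> K) * card {(c, d). c \<in> C \<and> d \<in> K \<and> c \<cdot> d = g'}"
      using cnt[OF C K gcl(1) gcl(2) g'] by simp
  qed simp
  also have "\<dots> = (\<Sum>K\<in>F. \<Sum>y\<in>K. f y * card {c\<in>C. c \<cdot> y = g'})"
    by (rule sum.cong) (simp_all add: key F_def)
  also have "\<dots> = (\<Sum>y\<in>Z. f y * card {c\<in>C. c \<cdot> y = g'})"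
    unfolding Zeq by (simp add: sum.Union_disjoint[OF finK disjF])
  finally show ?thesis unfolding Z_def .
qed

lemma L_inv:
  assumes C: "C \<in> D"
  shows "x \<in> G \<Longrightarrow> y \<in> cl x \<Longrightarrow> card (L C k y) = card (L C k x)"
proof (induction k arbitrary: x y)
  case 0
  have L0: "L C 0 g = (if g = zzn_one then {[]} else {})" for g
    by (auto simp: L_def gprod_Nil)
  have "y = zzn_one \<longleftrightarrow> x = zzn_one"
  proof
    assume "x = zzn_one" then show "y = zzn_one" using 0 cl_one by simp
  next
    assume y1: "y = zzn_one"
    have "cl x \<in> D" using cl[OF 0(1)] by blast
    then have "cl zzn_one = cl x" using cl_eq 0(2) y1 by simp
    then show "x = zzn_one" using cl_one cl[OF 0(1)] by (metis singletonD)
  qed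
  then show ?case by (simp add: L0)
next
  case (Suc k)
  have fC: "finite C" using cls[OF C] by blast
  show ?case
    unfolding L_Suc[OF fC]
  proof (rule conv_inv[OF C L_supp_fin[OF fC] L_supp_G[of C k] _ Suc(2) Suc(3), symmetric])
    fix x y assume "x \<in> G" "y \<in> cl x"
    then show "card (L C k y) = card (L C k x)" by (rule Suc.IH)
  qed
qed

end



lemma rot1_const:
  assumes r: "rotate1 xs = xs" shows "\<forall>a\<in>set xs. \<forall>b\<in>set xs. a = b"
proof -
  have nth: "xs ! i = xs ! 0" if "i < length xs" for i
    using that
  proof (induction i)
    case 0 then show ?case by simp
  next
    case (Suc i)
    then have il: "i < length xs" by simp
    have "xs ! Suc i = xs ! (Suc i mod length xs)" using Suc.prems by simp
    also have "\<dots> = rotate1 xs ! i" using nth_rotate1[OF il] by simp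
    also have "\<dots> = xs ! i" using r by simp
    also have "\<dots> = xs ! 0" using Suc.IH il by simp
    finally show ?case .
  qed
  show ?thesis
  proof (intro ballI)
    fix a b assume "a \<in> set xs" "b \<in> set xs"
    then obtain i j where "i < length xs" "xs ! i = a" "j < length xs" "xs ! j = b"
      by (metis in_set_conv_nth)
    then show "a = b" using nth by metis
  qed
qed

lemma rot_fix:
  assumes p: "prime p" and len: "length xs = p" and d: "0 < d" "d < p" and r: "rotate d xs = xs"
  shows "rotate1 xs = xs"
proof -
  have "\<not> p dvd d" using d by (simp add: nat_dvd_not_less)
  then have "coprime p d" using prime_imp_coprime_nat[OF p] by blast
  then have "coprime d p" by (simp add: coprime_commute)
  then obtain m where m: "[d * m = Suc 0] (mod p)" using cong_solve_coprime_nat by blast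
  have rj: "rotate (d * j) xs = xs" for j
  proof (induction j)
    case 0 then show ?case by simp
  next
    case (Suc j)
    have "rotate (d * Suc j) xs = rotate d (rotate (d * j) xs)" by (simp add: rotate_rotate add.commute)
    then show ?case using Suc.IH r by simp
  qed
  have p1: "p > 1" using prime_gt_1_nat[OF p] .
  have "rotate (d * m) xs = rotate ((d * m) mod p) xs" using rotate_conv_mod len by metis
  also have "(d * m) mod p = 1" using m p1 by (simp add: cong_def)
  finally have "rotate 1 xs = xs" using rj by simp
  then show ?thesis by simp
qed

context sr begin

lemma rot_count:
  assumes p: "prime p" and fC: "finite C" and CG: "C \<subseteq> G"
  shows "card (L C p g) mod p = card {c\<in>C. pw (int p) c = g} mod p"
proof -
  define A where "A = L C p g"
  define cst where "cst = (\<lambda>xs::(int\<times>int) list. \<forall>a\<in>set xs. \<forall>b\<in>set xs. a = b)"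
  define Ac where "Ac = {xs\<in>A. cst xs}"
  define A' where "A' = A - Ac"
  have p0: "p > 0" using prime_gt_0_nat[OF p] .
  have p1: "p > 1" using prime_gt_1_nat[OF p] .
  have finA: "finite A" unfolding A_def using L_fin[OF fC] .
  have sub: "Ac \<subseteq> A" unfolding Ac_def by blast
  have "card A' = card A - card Ac" unfolding A'_def using card_Diff_subset[OF finite_subset[OF sub finA] sub] .
  moreover have "card Ac \<le> card A" by (rule card_mono[OF finA sub])
  ultimately have "card A = card A' + card Ac" by arith
  moreover have "card Ac = card {c\<in>C. pw (int p) c = g}"
  proof -
    have e: "Ac = (\<lambda>c. replicate p c) ` {c\<in>C. pw (int p) c = g}"
    proof
      show "Ac \<subseteq> (\<lambda>c. replicate p c) ` {c\<in>C. pw (int p) c = g}"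
      proof
        fix xs assume xs: "xs \<in> Ac"
        then have l: "length xs = p" and s: "set xs \<subseteq> C" and gp: "gprod xs = g" and c: "cst xs"
          unfolding Ac_def A_def L_def by auto
        have ne: "xs \<noteq> []" using l p0 by auto
        then have h: "hd xs \<in> set xs" by simp
        have "\<forall>y\<in>set xs. y = hd xs" using c h unfolding cst_def by blast
        then have xr: "xs = replicate p (hd xs)" using replicate_same l by metis
        have hC: "hd xs \<in> C" using h s by blast
        then have "pw (int p) (hd xs) = g" using gp xr gprod_replicate CG by (metis subsetD)
        then show "xs \<in> (\<lambda>c. replicate p c) ` {c\<in>C. pw (int p) c = g}"
          using xr hC by blast
      qed
    next
      show "(\<lambda>c. replicate p c) ` {c\<in>C. pw (int p) c = g} \<subseteq> Ac"
      proof
        fix xs assume "xs \<in> (\<lambda>c. replicate p c) ` {c\<in>C. pw (int p) c = g}"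
        then obtain c where c: "c \<in> C" "pw (int p) c = g" and xs: "xs = replicate p c" by blast
        have "gprod xs = g" using xs c gprod_replicate CG by blast
        then show "xs \<in> Ac" unfolding Ac_def A_def L_def cst_def using xs c p0 by auto
      qed
    qed
    have i: "inj_on (\<lambda>c. replicate p c) {c\<in>C. pw (int p) c = g}"
    proof (rule inj_onI)
      fix a b assume "replicate p a = replicate p b"
      then show "a = b" using p0 by (simp add: replicate_eq_replicate)
    qed
    show ?thesis unfolding e using card_image[OF i] .
  qed
  moreover have "p dvd card A'"
  proof -
    define r where "r = {(x, y). x \<in> A' \<and> y \<in> A' \<and> (\<exists>k. y = rotate k x)}"
    have A'_rot: "rotate k x \<in> A'" if "x \<in> A'" for x k
      using that unfolding A'_def Ac_def A_def L_def cst_def by (simp add: gprod_rotate)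
    have lenA': "length x = p" if "x \<in> A'" for x
      using that unfolding A'_def A_def L_def by simp
    have eq: "equiv A' r"
    proof (rule equivI)
      show "refl_on A' r" unfolding refl_on_def r_def
      proof (intro conjI ballI subsetI)
        fix x assume "x \<in> A'" then show "(x, x) \<in> {(x, y). x \<in> A' \<and> y \<in> A' \<and> (\<exists>k. y = rotate k x)}"
          by (auto intro: exI[of _ 0])
      qed
    next
      show "sym r" unfolding sym_def r_def
      proof (intro allI impI)
        fix x y assume "(x, y) \<in> {(x, y). x \<in> A' \<and> y \<in> A' \<and> (\<exists>k. y = rotate k x)}"
        then obtain k where x: "x \<in> A'" and y: "y \<in> A'" and yk: "y = rotate k x" by blast
        have "rotate (k * (p - 1)) y = rotate (k * (p - 1) + k) x" using yk by (simp add: rotate_rotate)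
        also have "k * (p - 1) + k = k * p" using p0 by (cases p) (simp_all add: algebra_simps)
        also have "rotate (k * p) x = x" using lenA'[OF x] by simp
        finally show "(y, x) \<in> {(x, y). x \<in> A' \<and> y \<in> A' \<and> (\<exists>k. y = rotate k x)}"
          using x y by blast
      qed
    next
      show "trans r" unfolding trans_def r_def
      proof (intro allI impI)
        fix x y z assume "(x, y) \<in> {(x, y). x \<in> A' \<and> y \<in> A' \<and> (\<exists>k. y = rotate k x)}"
          "(y, z) \<in> {(x, y). x \<in> A' \<and> y \<in> A' \<and> (\<exists>k. y = rotate k x)}"
        then obtain k1 k2 where "x \<in> A'" "z \<in> A'" "y = rotate k1 x" "z = rotate k2 y" by blast
        then show "(x, z) \<in> {(x, y). x \<in> A' \<and> y \<in> A' \<and> (\<exists>k. y = rotate k x)}"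
          by (auto simp: rotate_rotate)
      qed
    next
      show "r \<subseteq> A' \<times> A'" unfolding r_def by blast
    qed
    have finA': "finite A'" unfolding A'_def using finA by simp
    show ?thesis
    proof (rule equiv_imp_dvd_card[OF finA' eq])
      fix X assume "X \<in> A' // r"
      then obtain x where x: "x \<in> A'" and X: "X = r `` {x}" unfolding quotient_def by blast
      have Xe: "X = (\<lambda>k. rotate k x) ` {..<p}"
      proof
        show "X \<subseteq> (\<lambda>k. rotate k x) ` {..<p}"
        proof
          fix y assume "y \<in> X"
          then obtain k where yk: "y = rotate k x" unfolding X r_def by blast
          then have "y = rotate (k mod p) x" using rotate_conv_mod lenA'[OF x] by metis
          moreover have "k mod p < p" using p0 by simp
          ultimately show "y \<in> (\<lambda>k. rotate k x) ` {..<p}" by blast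
        qed
      next
        show "(\<lambda>k. rotate k x) ` {..<p} \<subseteq> X"
          unfolding X r_def using x A'_rot by blast
      qed
      have nc: "\<not> cst x" using x unfolding A'_def Ac_def by blast
      have inj: "inj_on (\<lambda>k. rotate k x) {..<p}"
      proof -
        have *: "i = j" if ij: "i < p" "j < p" "i \<le> j" "rotate i x = rotate j x" for i j
        proof (rule ccontr)
          assume "i \<noteq> j"
          then have d: "0 < j - i" "j - i < p" using ij by auto
          have "rotate (p - i) (rotate i x) = rotate (p - i) (rotate j x)" using ij by simp
          then have R: "rotate (p - i + i) x = rotate (p - i + j) x" by (simp only: rotate_rotate)
          have E1: "p - i + i = p" using ij by arith
          have E2: "p - i + j = p + (j - i)" using ij by arith
          from R have "rotate p x = rotate (p + (j - i)) x" unfolding E1 E2 .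
          note pr = this
          have rp: "rotate p x = x" using lenA'[OF x] by simp
          have "x = rotate p x" by (rule rp[symmetric])
          also have "\<dots> = rotate (p + (j - i)) x" by (rule pr)
          also have "\<dots> = rotate (j - i) (rotate p x)" by (simp only: rotate_rotate add.commute)
          also have "\<dots> = rotate (j - i) x" by (simp only: rp)
          finally have "x = rotate (j - i) x" .
          then have "rotate1 x = x" using rot_fix[OF p lenA'[OF x] d] by simp
          then show False using rot1_const nc unfolding cst_def by blast
        qed
        show ?thesis
        proof (rule inj_onI)
          fix i j assume "i \<in> {..<p}" "j \<in> {..<p}" "rotate i x = rotate j x"
          then show "i = j" using *[of i j] *[of j i] by (cases "i \<le> j") auto
        qed
      qed
      show "p dvd card X" unfolding Xe card_image[OF inj] by simp
    qed
  qed
  ultimately show ?thesis unfolding A_def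
    by (metis add_0 dvd_imp_mod_0 mod_add_left_eq)
qed

lemma frob:
  assumes C: "C \<in> D" and p: "prime p" and inj: "inj_on (pw (int p)) C"
  shows "Scl (pw (int p) ` C)"
  unfolding Scl_def
proof (intro conjI ballI subsetI)
  fix y assume "y \<in> pw (int p) ` C" then show "y \<in> G" using pw_G by blast
next
  fix y y' assume y: "y \<in> pw (int p) ` C" and y': "y' \<in> cl y"
  have fC: "finite C" and CG: "C \<subseteq> G" using cls[OF C] by auto
  have yG: "y \<in> G" using y pw_G by blast
  have p1: "p > 1" using prime_gt_1_nat[OF p] .
  have "card {c\<in>C. pw (int p) c = y} = 1"
  proof -
    obtain c where c: "c \<in> C" "y = pw (int p) c" using y by blast
    have "{c\<in>C. pw (int p) c = y} = {c}" using c inj unfolding inj_on_def by blast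
    then show ?thesis by simp
  qed
  moreover have "card (L C p y') = card (L C p y)" using L_inv[OF C yG y'] .
  ultimately have "card {c\<in>C. pw (int p) c = y'} mod p = 1"
    using rot_count[OF p fC CG, of y] rot_count[OF p fC CG, of y'] p1 by simp
  then have "card {c\<in>C. pw (int p) c = y'} \<noteq> 0" by (metis mod_0 zero_neq_one)
  then have "{c\<in>C. pw (int p) c = y'} \<noteq> {}" by (metis (no_types) card.empty)
  then show "y' \<in> pw (int p) ` C" by blast
qed

end



context sr begin

lemma pw_Scl_gen:
  assumes U: "U \<subseteq> G"
    and Q: "\<And>p. prime p \<Longrightarrow> Q p \<Longrightarrow> pw (int p) ` U \<subseteq> U \<and> inj_on (pw (int p)) U"
  shows "0 < k \<Longrightarrow> (\<forall>p. prime p \<and> p dvd k \<longrightarrow> Q p) \<Longrightarrow> Scl X \<Longrightarrow> X \<subseteq> U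
          \<Longrightarrow> Scl (pw (int k) ` X) \<and> pw (int k) ` X \<subseteq> U"
proof (induction k arbitrary: X rule: less_induct)
  case (less k)
  show ?case
  proof (cases "k = 1")
    case True
    have "pw (int k) ` X = X"
    proof -
      have "pw 1 x = x" if "x \<in> X" for x using pw_one that less.prems(3) unfolding Scl_def by blast
      then show ?thesis using True by (simp add: image_cong)
    qed
    then show ?thesis using less.prems by simp
  next
    case False
    then obtain p where p: "prime p" "p dvd k" using prime_factor_nat by blast
    then obtain k' where kk: "k = p * k'" by (elim dvdE)
    have p1: "p > 1" using prime_gt_1_nat[OF p(1)] .
    have k'pos: "0 < k'" using less.prems(1) kk by (cases k') auto
    have k'lt: "k' < k" using kk p1 k'pos by simp
    have Qk': "\<forall>q. prime q \<and> q dvd k' \<longrightarrow> Q q" using less.prems(2) kk by (metis dvd_mult)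
    from less.IH[OF k'lt k'pos Qk' less.prems(3) less.prems(4)]
    have Y: "Scl (pw (int k') ` X)" "pw (int k') ` X \<subseteq> U" by auto
    define Y where "Y = pw (int k') ` X"
    have Qp: "pw (int p) ` U \<subseteq> U" "inj_on (pw (int p)) U" using Q[OF p(1)] less.prems(2) p by auto
    have img: "pw (int k) ` X = pw (int p) ` Y"
      unfolding Y_def image_image kk by (simp add: pw_comp)
    have "Y = \<Union>{C\<in>D. C \<subseteq> Y}" using Scl_decomp Y(1) unfolding Y_def by blast
    then have "pw (int p) ` Y = \<Union>((\<lambda>C. pw (int p) ` C) ` {C\<in>D. C \<subseteq> Y})" by blast
    moreover have "Scl (pw (int p) ` C)" if "C \<in> {C\<in>D. C \<subseteq> Y}" for C
    proof -
      have "C \<subseteq> U" using that Y(2) unfolding Y_def by blast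
      then have "inj_on (pw (int p)) C" using Qp(2) inj_on_subset by blast
      then show ?thesis using frob that p(1) by blast
    qed
    ultimately have "Scl (pw (int p) ` Y)" using Scl_Union by (metis (no_types, lifting) imageE)
    moreover have "pw (int p) ` Y \<subseteq> U" using Qp(1) Y(2) unfolding Y_def by blast
    ultimately show ?thesis unfolding img by simp
  qed
qed

lemma pw_Scl_G:
  assumes k: "0 < k" and cop: "coprime (int k) n" and X: "Scl X"
  shows "Scl (pw (int k) ` X)"
proof -
  have Q: "pw (int p) ` G \<subseteq> G \<and> inj_on (pw (int p)) G" if "prime p" "\<not> int p dvd n" for p
  proof -
    have "prime (int p)" using that(1) by (simp add: prime_nat_int_transfer)
    then have "coprime (int p) n" using prime_imp_coprime that(2) by blast
    moreover have "int p \<noteq> 0" using that(1) by auto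
    ultimately show ?thesis using pw_inj pw_G by blast
  qed
  have "\<forall>p. prime p \<and> p dvd k \<longrightarrow> \<not> int p dvd n"
  proof (intro allI impI)
    fix p assume p: "prime p \<and> p dvd k"
    show "\<not> int p dvd n"
    proof
      assume "int p dvd n"
      moreover have "int p dvd int k" using p by simp
      ultimately have "is_unit (int p)" using cop coprime_common_divisor by blast
      then show False using p by simp
    qed
  qed
  then show ?thesis using pw_Scl_gen[of G "\<lambda>p. \<not> int p dvd n", OF _ Q k] X unfolding Scl_def by blast
qed

abbreviation "H \<equiv> Zn_sub n"

lemma H_G: "H \<subseteq> G" using npos by (auto simp: Zn_sub_def inG)

lemma pw_Scl_H:
  assumes k: "0 < k" and X: "Scl X" "X \<subseteq> H"
  shows "Scl (pw (int k) ` X)"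
proof -
  have Q: "pw (int p) ` H \<subseteq> H \<and> inj_on (pw (int p)) H" if "prime p" for p
  proof
    show "pw (int p) ` H \<subseteq> H"
    proof
      fix y assume "y \<in> pw (int p) ` H"
      then obtain m where "y = pw (int p) (n * m, 0)" unfolding Zn_sub_def by blast
      then have "y = (n * (int p * m), 0)" by (simp add: zzn_pow_def algebra_simps)
      then show "y \<in> H" unfolding Zn_sub_def by blast
    qed
  next
    have "int p \<noteq> 0" using that by auto
    then show "inj_on (pw (int p)) H"
      unfolding inj_on_def Zn_sub_def by (auto simp: zzn_pow_def)
  qed
  show ?thesis using pw_Scl_gen[of H "\<lambda>p. True", OF H_G Q k] X by blast
qed

end



locale srH = sr + assumes HS: "Scl (Zn_sub n)"
begin

lemma cl_H: "h \<in> H \<Longrightarrow> cl h \<subseteq> H"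
  using HS unfolding Scl_def by blast

lemma card_inj_H: "X \<subseteq> H \<Longrightarrow> 0 < s \<Longrightarrow> card (pw (int s) ` X) = card X"
proof -
  assume X: "X \<subseteq> H" and s: "0 < s"
  have "inj_on (pw (int s)) X"
    using X s unfolding inj_on_def Zn_sub_def by (auto simp: zzn_pow_def)
  then show ?thesis by (rule card_image)
qed

lemma scale_one:
  assumes D0: "D0 \<in> D" and D1: "D1 \<in> D" "D1 \<subseteq> H" and u: "u \<in> D1" and s: "0 < s"
    and d: "pw (int s) u \<in> D0"
    and cardeq: "card D1 = card D0"
    and Meq: "(\<lambda>y. \<bar>fst y\<bar>) ` D1 = (\<lambda>y. \<bar>fst y\<bar>) ` D0"
    and pos: "\<forall>y\<in>D1. fst y \<noteq> 0"
  shows "s = 1"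
proof -
  have sc: "Scl (pw (int s) ` D1)" using pw_Scl_H[OF s Scl_class[OF D1(1)] D1(2)] .
  have "pw (int s) u \<in> pw (int s) ` D1" using u by blast
  then have "cl (pw (int s) u) \<subseteq> pw (int s) ` D1" using sc unfolding Scl_def by blast
  then have sub: "D0 \<subseteq> pw (int s) ` D1" using cl_eq[OF D0 d] by simp
  have fin1: "finite D1" using cls[OF D1(1)] by blast
  have "card (pw (int s) ` D1) = card D0" using card_inj_H[OF D1(2) s] cardeq by simp
  then have eq: "D0 = pw (int s) ` D1" using card_subset_eq[OF finite_imageI[OF fin1] sub] by simp
  define R where "R = Max ((\<lambda>y. \<bar>fst y\<bar>) ` D1)"
  have ne: "D1 \<noteq> {}" using u by blast
  have "R \<in> (\<lambda>y. \<bar>fst y\<bar>) ` D1" unfolding R_def using fin1 ne by simp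
  then obtain y1 where y1: "y1 \<in> D1" "\<bar>fst y1\<bar> = R" by blast
  have "pw (int s) y1 \<in> D0" using eq y1 by blast
  then have "\<bar>fst (pw (int s) y1)\<bar> \<in> (\<lambda>y. \<bar>fst y\<bar>) ` D1" using Meq by blast
  then have "\<bar>fst (pw (int s) y1)\<bar> \<le> R" unfolding R_def using fin1 by simp
  then have le: "int s * R \<le> R" using y1(2) by (simp add: zzn_pow_def abs_mult)
  have "R > 0" using y1 pos by auto
  then have "int s \<le> 1" using le by (simp add: mult_le_cancel_right2)
  then show "s = 1" using s by simp
qed

lemma one_not: "(n, 0) \<noteq> zzn_one" using npos by (simp add: zzn_one_def)

lemma zH: "(n, 0) \<in> H" unfolding Zn_sub_def by (auto intro: exI[of _ 1])

lemma inv_D0: "zzn_inv n (n, 0) = (- n, 0)" by (simp add: zzn_inv_def)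

lemma fst_nz_H: "C \<in> D \<Longrightarrow> C \<subseteq> H \<Longrightarrow> C \<noteq> {zzn_one} \<Longrightarrow> \<forall>y\<in>C. fst y \<noteq> 0"
proof
  fix y assume C: "C \<in> D" "C \<subseteq> H" "C \<noteq> {zzn_one}" and y: "y \<in> C"
  show "fst y \<noteq> 0"
  proof
    assume f0: "fst y = 0"
    from y C(2) obtain m where "y = (n * m, 0)" unfolding Zn_sub_def by blast
    then have "y = zzn_one" using f0 npos by (simp add: zzn_one_def)
    then have "C = {zzn_one}" using cl_eq[OF C(1) y] cl_one by simp
    then show False using C(3) by simp
  qed
qed

lemma D0_sub: "cl (n, 0) \<subseteq> {(n, 0), (- n, 0)}"
proof
  define D0 where "D0 = cl (n, 0)"
  have zG: "(n, 0) \<in> G" using zH H_G by blast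
  have D0: "D0 \<in> D" "(n, 0) \<in> D0" using cl[OF zG] unfolding D0_def by auto
  have D0H: "D0 \<subseteq> H" using cl_H[OF zH] unfolding D0_def .
  have D0ne: "D0 \<noteq> {zzn_one}" using D0(2) one_not by auto
  define D0' where "D0' = set_inv n D0"
  have D0': "D0' \<in> D" "(- n, 0) \<in> D0'"
    using invc[OF D0(1)] D0(2) inv_D0 unfolding D0'_def set_inv_def by (auto intro: rev_image_eqI)
  have inv_H: "zzn_inv n y \<in> H" if "y \<in> H" for y
    using that unfolding Zn_sub_def zzn_inv_def by (auto intro: exI[of _ "- m" for m])
  have D0'H: "D0' \<subseteq> H" unfolding D0'_def set_inv_def using D0H inv_H by blast
  have card': "card D0' = card D0"
  proof -
    have "inj_on (zzn_inv n) D0"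
      unfolding inj_on_def using D0H unfolding Zn_sub_def by (auto simp: zzn_inv_def)
    then show ?thesis unfolding D0'_def set_inv_def by (rule card_image)
  qed
  have M': "(\<lambda>y. \<bar>fst y\<bar>) ` D0' = (\<lambda>y. \<bar>fst y\<bar>) ` D0"
    unfolding D0'_def set_inv_def image_image by (simp add: zzn_inv_def)
  have D0'ne: "D0' \<noteq> {zzn_one}"
  proof
    assume "D0' = {zzn_one}"
    then have "(- n, 0) = zzn_one" using D0'(2) by simp
    then show False using npos by (simp add: zzn_one_def)
  qed
  fix d assume dD: "d \<in> D0"
  from dD D0H obtain t where dt: "d = (n * t, 0)" unfolding Zn_sub_def by blast
  have "fst d \<noteq> 0" using fst_nz_H[OF D0(1) D0H D0ne] dD by blast
  then have t0: "t \<noteq> 0" using dt by simp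
  show "d \<in> {(n, 0), (- n, 0)}"
  proof (cases "t > 0")
    case True
    have "pw (int (nat t)) (n, 0) = d" using True dt by (simp add: zzn_pow_def algebra_simps)
    then have "nat t = 1"
      using scale_one[OF D0(1) D0(1) D0H D0(2), of "nat t"] True dD fst_nz_H[OF D0(1) D0H D0ne]
      by simp
    then have "t = 1" using True by (simp add: nat_eq_iff)
    then show ?thesis using dt by simp
  next
    case False
    then have tn: "t < 0" using t0 by simp
    have "pw (int (nat (- t))) (- n, 0) = d" using tn dt by (simp add: zzn_pow_def algebra_simps)
    then have "nat (- t) = 1"
      using scale_one[OF D0(1) D0'(1) D0'H D0'(2), of "nat (- t)"] tn dD card' M'
        fst_nz_H[OF D0'(1) D0'H D0'ne]
      by simp
    then have "t = -1" using tn by (simp add: nat_eq_iff)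
    then show ?thesis using dt by simp
  qed
qed

lemma cl_inv: "x \<in> G \<Longrightarrow> cl (zzn_inv n x) = set_inv n (cl x)"
proof -
  assume x: "x \<in> G"
  have "set_inv n (cl x) \<in> D" using invc cl[OF x] by blast
  moreover have "zzn_inv n x \<in> set_inv n (cl x)" using cl[OF x] unfolding set_inv_def by blast
  ultimately show ?thesis using cl_eq by blast
qed

lemma clH: assumes h: "h \<in> H" shows "cl h \<subseteq> {h, zzn_inv n h}"
proof -
  from h obtain t where ht: "h = (n * t, 0)" unfolding Zn_sub_def by blast
  have hinv: "zzn_inv n h = (- (n * t), 0)" using ht by (simp add: zzn_inv_def)
  show ?thesis
  proof (cases "t = 0")
    case True
    then have "h = zzn_one" using ht by (simp add: zzn_one_def)
    then show ?thesis using cl_one by simp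
  next
    case False
    define u where "u = (if t > 0 then (n, 0) else (- n, 0 :: int))"
    define s where "s = nat \<bar>t\<bar>"
    have s0: "0 < s" using False unfolding s_def by simp
    have hu: "h = pw (int s) u" using ht unfolding u_def s_def by (auto simp: zzn_pow_def)
    have zG: "(n, 0) \<in> G" using zH H_G by blast
    have clu: "cl u \<subseteq> {(n, 0), (- n, 0)}"
    proof (cases "t > 0")
      case True then show ?thesis unfolding u_def using D0_sub by simp
    next
      case False
      have "cl u = set_inv n (cl (n, 0))" unfolding u_def using False cl_inv[OF zG] inv_D0 by simp
      also have "\<dots> \<subseteq> zzn_inv n ` {(n, 0), (- n, 0)}" unfolding set_inv_def using D0_sub by blast
      also have "\<dots> = {(- n, 0), (n, 0)}" by (simp add: zzn_inv_def)
      finally show ?thesis by blast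
    qed
    have uH: "u \<in> H" unfolding u_def Zn_sub_def by (auto intro: exI[of _ 1] exI[of _ "-1"])
    have uG: "u \<in> G" using uH H_G by blast
    have sc: "Scl (pw (int s) ` cl u)" using pw_Scl_H[OF s0 Scl_class cl_H[OF uH]] cl[OF uG] by blast
    have "h \<in> pw (int s) ` cl u" using hu cl[OF uG] by blast
    then have "cl h \<subseteq> pw (int s) ` cl u" using sc unfolding Scl_def by blast
    also have "\<dots> \<subseteq> pw (int s) ` {(n, 0), (- n, 0)}" using clu by blast
    also have "\<dots> \<subseteq> {h, zzn_inv n h}" using ht hinv unfolding s_def
      by (auto simp: zzn_pow_def abs_if algebra_simps)
    finally show ?thesis .
  qed
qed

end



lemma small_mult:
  fixes a b N :: int
  assumes "0 < N" "\<bar>a\<bar> < N" "a = N * b" shows "b = 0"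
proof (rule ccontr)
  assume "b \<noteq> 0"
  then have "1 \<le> \<bar>b\<bar>" by simp
  then have "N \<le> N * \<bar>b\<bar>" using assms(1) by simp
  also have "\<dots> = \<bar>a\<bar>" using assms(1,3) by (simp add: abs_mult)
  finally show False using assms(2) by simp
qed

context srH begin

lemma pwN:
  assumes Nm: "N mod n = 1 mod n" and x: "x \<in> G" shows "pw N x = (N * fst x, snd x)"
proof -
  have "(N * snd x) mod n = (1 * snd x) mod n" by (metis Nm mod_mult_left_eq)
  then show ?thesis using x by (simp add: zzn_pow_def inG)
qed

lemma cop_N: "N mod n = 1 mod n \<Longrightarrow> coprime N n"
proof -
  assume Nm: "N mod n = 1 mod n"
  have n0: "n \<noteq> 0" using npos by simp
  have "coprime (1 mod n) n" using coprime_mod_left_iff[OF n0] by simp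
  then have "coprime (N mod n) n" using Nm by simp
  then show ?thesis using coprime_mod_left_iff[OF n0] by simp
qed

lemma dil:
  assumes C: "C \<in> D" and N0: "0 < N" and Nm: "N mod n = 1 mod n"
    and big: "\<forall>y\<in>C. 2 * \<bar>fst y\<bar> < N"
  shows "pw N ` C \<in> D"
proof -
  have CG: "C \<subseteq> G" using cls[OF C] by blast
  have NN: "N = int (nat N)" using N0 by simp
  have sc: "Scl (pw N ` C)"
    using pw_Scl_G[of "nat N" C] N0 cop_N[OF Nm] Scl_class[OF C] NN by simp
  obtain x where x: "x \<in> C" using cls[OF C] by blast
  have xG: "x \<in> G" using x CG by blast
  define E where "E = cl (pw N x)"
  have ED: "E \<in> D" "pw N x \<in> E" using cl[OF pw_G] unfolding E_def by auto
  have Esub: "E \<subseteq> pw N ` C" using sc x unfolding E_def Scl_def by blast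
  define i where "i = fst x"
  have "n dvd N - 1" using Nm by (simp add: mod_eq_dvd_iff)
  then obtain q where q: "N - 1 = n * q" by (elim dvdE)
  define h where "h = ((N - 1) * i, 0 :: int)"
  define hi where "hi = (- ((N - 1) * i), 0 :: int)"
  have hH: "h \<in> H" unfolding h_def Zn_sub_def q by (auto intro: exI[of _ "q * i"] simp: algebra_simps)
  have hiH: "hi \<in> H" unfolding hi_def Zn_sub_def q by (auto intro: exI[of _ "- (q * i)"] simp: algebra_simps)
  have hiG: "hi \<in> G" using hiH H_G by blast
  have hinv: "zzn_inv n hi = h" unfolding hi_def h_def by (simp add: zzn_inv_def)
  have clhi: "cl hi \<subseteq> {hi, h}" using clH[OF hiH] hinv by simp
  have "pw N x \<cdot> hi = x"
    using pwN[OF Nm xG] xG unfolding hi_def i_def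
    by (cases x) (simp add: zzn_mult_def inG algebra_simps)
  then have "\<exists>a b. x = a \<cdot> b \<and> a \<in> E \<and> b \<in> cl hi" using ED(2) cl[OF hiG] by metis
  then have "x \<in> prodset E (cl hi)" unfolding prodset_def mem_Collect_eq .
  then have Csub: "C \<subseteq> prodset E (cl hi)"
    using Scl_prodset[OF ED(1) cl[OF hiG, THEN conjunct1]] cl_eq[OF C x] unfolding Scl_def by blast
  have "pw N ` C \<subseteq> E"
  proof
    fix z assume "z \<in> pw N ` C"
    then obtain y where y: "y \<in> C" and z: "z = pw N y" by blast
    have yG: "y \<in> G" using y CG by blast
    from y Csub obtain e w where e: "e \<in> E" and w: "w \<in> cl hi" and ye: "y = e \<cdot> w"
      unfolding prodset_def by blast
    from e Esub obtain y2 where y2: "y2 \<in> C" and ey: "e = pw N y2" by blast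
    have y2G: "y2 \<in> G" using y2 CG by blast
    have e2: "e = (N * fst y2, snd y2)" using ey pwN[OF Nm y2G] by simp
    have bx: "2 * \<bar>i\<bar> < N" using big x unfolding i_def by blast
    have by1: "2 * \<bar>fst y\<bar> < N" using big y by blast
    have by2: "2 * \<bar>fst y2\<bar> < N" using big y2 by blast
    have sndy: "snd y = snd y2"
      using ye e2 w clhi y2G unfolding h_def hi_def by (auto simp: zzn_mult_def inG)
    have fsty: "fst y = fst y2"
    proof -
      have "w = hi \<or> w = h" using w clhi by blast
      then show ?thesis
      proof
        assume wh: "w = hi"
        then have "fst y = N * fst y2 - (N - 1) * i" using ye e2 unfolding hi_def by (simp add: zzn_mult_def)
        then have "fst y - i = N * (fst y2 - i)" by (simp add: algebra_simps)
        moreover have "\<bar>fst y - i\<bar> < N" using bx by1 by simp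
        ultimately have "fst y2 - i = 0" using small_mult[OF N0] by blast
        then show ?thesis using \<open>fst y - i = N * (fst y2 - i)\<close> by simp
      next
        assume wh: "w = h"
        then have "fst y = N * fst y2 + (N - 1) * i" using ye e2 unfolding h_def by (simp add: zzn_mult_def)
        then have "fst y + i = N * (fst y2 + i)" by (simp add: algebra_simps)
        moreover have "\<bar>fst y + i\<bar> < N" using bx by1 by simp
        ultimately have "fst y2 + i = 0" using small_mult[OF N0] by blast
        then show ?thesis using \<open>fst y + i = N * (fst y2 + i)\<close> by simp
      qed
    qed
    have "y = y2" using sndy fsty by (simp add: prod_eq_iff)
    then show "z \<in> E" using z ey e by simp
  qed
  then have "pw N ` C = E" using Esub by blast
  then show ?thesis using ED(1) by simp
qed

lemma pos_case:
  assumes k: "0 < k" and cop: "coprime (int k) n" and C: "C \<in> D"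
  shows "pw (int k) ` C \<in> D"
proof -
  have CG: "C \<subseteq> G" and fC: "finite C" and Cne: "C \<noteq> {}" using cls[OF C] by auto
  define M where "M = Max ((\<lambda>y. \<bar>fst y\<bar>) ` C)"
  have Mge: "\<bar>fst y\<bar> \<le> M" if "y \<in> C" for y unfolding M_def using fC that by simp
  have M0: "0 \<le> M" using Mge Cne by force
  obtain x where x: "[int k * x = 1] (mod n)" using cong_solve_coprime_int[OF cop] by blast
  define m0 where "m0 = x mod n"
  have m00: "0 \<le> m0" unfolding m0_def using npos by simp
  define m where "m = m0 + n * (2 * M + 1)"
  define N where "N = int k * m"
  have mpos: "0 < m" unfolding m_def using m00 npos M0 by (simp add: add_nonneg_pos)
  have mge: "2 * M + 1 \<le> m"
  proof -
    have "2 * M + 1 \<le> n * (2 * M + 1)" using npos M0 by simp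
    then show ?thesis unfolding m_def using m00 by simp
  qed
  have Nge: "m \<le> N" unfolding N_def using k mpos by simp
  have N0: "0 < N" using mpos Nge by simp
  have Nm: "N mod n = 1 mod n"
  proof -
    have "N mod n = (int k * m0 + n * (int k * (2 * M + 1))) mod n" unfolding N_def m_def by (simp add: algebra_simps)
    also have "\<dots> = (int k * m0) mod n" by simp
    also have "\<dots> = (int k * x) mod n" unfolding m0_def by (simp add: mod_mult_right_eq)
    also have "\<dots> = 1 mod n" using x by (simp add: cong_def)
    finally show ?thesis .
  qed
  have big: "\<forall>y\<in>C. 2 * \<bar>fst y\<bar> < N" using Mge mge Nge by force
  have dN: "pw N ` C \<in> D" using dil[OF C N0 Nm big] .
  have copN: "coprime N n" using cop_N[OF Nm] .
  then have copm: "coprime m n" unfolding N_def by simp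
  define Y where "Y = pw (int k) ` C"
  have sY: "Scl Y" unfolding Y_def using pw_Scl_G[OF k cop Scl_class[OF C]] .
  have YG: "Y \<subseteq> G" using sY unfolding Scl_def by blast
  obtain y where y: "y \<in> Y" using Cne unfolding Y_def by blast
  have yG: "y \<in> G" using y YG by blast
  define E' where "E' = cl y"
  have E': "E' \<in> D" "y \<in> E'" "E' \<subseteq> Y" using cl[OF yG] sY y unfolding E'_def Scl_def by auto
  have mm: "m = int (nat m)" using mpos by simp
  have sE: "Scl (pw m ` E')" using pw_Scl_G[of "nat m" E'] mpos copm Scl_class[OF E'(1)] mm by simp
  have "pw m ` Y = pw N ` C" unfolding Y_def image_image N_def by (simp add: pw_comp mult.commute)
  then have sub: "pw m ` E' \<subseteq> pw N ` C" using E'(3) by blast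
  have "pw m ` E' = pw N ` C" using Scl_in_class[OF sE _ dN sub] E'(2) by blast
  then have "pw m ` E' = pw m ` Y" using \<open>pw m ` Y = pw N ` C\<close> by simp
  moreover have "inj_on (pw m) G" using pw_inj[OF _ copm] mpos by simp
  ultimately have "E' = Y" using inj_on_image_eq_iff[of "pw m" G E' Y] E'(3) YG by blast
  then show ?thesis using E'(1) unfolding Y_def by (simp only:)
qed

end

lemma srH_from:
  assumes n: "n > 0" and sp: "schur_partition TYPE('f::field_char_0) n D"
    and H: "S_subset D (Zn_sub n)"
  shows "srH n D"
proof -
  have sr: "sr n D"
  proof (unfold_locales)
    show "n > 0" by (rule n)
  next
    fix C assume "C \<in> D" then show "C \<noteq> {} \<and> finite C \<and> C \<subseteq> zzn_carrier n"
      using sp unfolding schur_partition_def by blast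
  next
    fix C C' assume "C \<in> D" "C' \<in> D" "C \<noteq> C'" then show "C \<inter> C' = {}"
      using sp unfolding schur_partition_def by blast
  next
    show "\<Union>D = zzn_carrier n" using sp unfolding schur_partition_def by blast
  next
    show "{zzn_one} \<in> D" using sp unfolding schur_partition_def by blast
  next
    fix C assume "C \<in> D" then show "set_inv n C \<in> D" using sp unfolding schur_partition_def by blast
  next
    fix C1 C2 K x y assume "C1 \<in> D" "C2 \<in> D" "K \<in> D" "x \<in> K" "y \<in> K"
    then show "card {(c, d). c \<in> C1 \<and> d \<in> C2 \<and> zzn_mult n c d = x}
       = card {(c, d). c \<in> C1 \<and> d \<in> C2 \<and> zzn_mult n c d = y}"
      using count_inv[OF sp] by blast
  qed
  show ?thesis
  proof (rule srH.intro[OF sr])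
    show "srH_axioms n D" unfolding srH_axioms_def using sr.Scl_S_subset[OF sr] H by blast
  qed
qed

theorem theorem3p1:
  fixes n :: int and \<D> :: "(int \<times> int) set set" and C :: "(int \<times> int) set"
  assumes "n > 0"
    and "schur_partition TYPE('f::field_char_0) n \<D>"
    and "S_subset \<D> (Zn_sub n)"
    and "S_subset \<D> C"
  shows "C \<in> \<D> \<longleftrightarrow> (\<forall>k::int. gcd k n = 1 \<longrightarrow> set_pow n k C \<in> \<D>)"
proof -
  interpret srH n \<D> using srH_from[OF assms(1-3)] .
  have CS: "Scl C" using Scl_S_subset assms(4) by blast
  then have CG: "C \<subseteq> G" unfolding Scl_def by blast
  show ?thesis
  proof
    assume C: "C \<in> \<D>"
    show "\<forall>k::int. gcd k n = 1 \<longrightarrow> set_pow n k C \<in> \<D>"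
    proof (intro allI impI)
      fix k :: int assume g: "gcd k n = 1"
      then have cop: "coprime k n" by (simp add: coprime_iff_gcd_eq_1)
      consider "k > 0" | "k < 0" | "k = 0" by linarith
      then show "set_pow n k C \<in> \<D>"
      proof cases
        case 1
        then have "int (nat k) = k" by simp
        then show ?thesis using pos_case[of "nat k" C] 1 cop C unfolding set_pow_def by simp
      next
        case 2
        then have kk: "int (nat (- k)) = - k" by simp
        have "coprime (- k) n" using cop by simp
        then have "pw (- k) ` C \<in> \<D>" using pos_case[of "nat (- k)" C] 2 C kk by simp
        then have "set_inv n (pw (- k) ` C) \<in> \<D>" by (rule invc)
        moreover have "set_inv n (pw (- k) ` C) = set_pow n k C"
          unfolding set_inv_def set_pow_def image_image using pw_neg[of "- k"] by simp
        ultimately show ?thesis by simp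
      next
        case 3
        then have n1: "n = 1" using g npos by simp
        have "set_pow n k C = {zzn_one}"
          using 3 n1 cls[OF C] unfolding set_pow_def by (auto simp: zzn_pow_def zzn_one_def)
        then show ?thesis using one by simp
      qed
    qed
  next
    assume "\<forall>k::int. gcd k n = 1 \<longrightarrow> set_pow n k C \<in> \<D>"
    then have "set_pow n 1 C \<in> \<D>" by simp
    moreover have "set_pow n 1 C = C"
    proof -
      have eq: "pw 1 x = x" if "x \<in> C" for x using pw_one CG that by blast
      have "pw 1 ` C = (\<lambda>x. x) ` C" by (rule image_cong[OF refl eq])
      then show ?thesis unfolding set_pow_def by simp
    qed
    ultimately show "C \<in> \<D>" by simp
  qed
qed


end
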